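(* Let $m \le n$ and let $A \in \mathbb{R}^{m\times n}$ be a matrix with orthonormal rows. Let $b$ be a positive integer and let $A' \in \mathbb{R}^{m\times n}$ be obtained by rounding each entry of $A$ to $b$ bits, so that every entry of $A - A'$ has absolute value less than $2^{-b}$. Then for every $v \in \mathbb{R}^n$ there exists $s \in \mathbb{R}^n$ such that $A'v = A(v-s)$ and $\|s\|_2 \le n\,2^{-b}\,\|v\|_2$.
   Context: $\|\cdot\|_2$ denotes the Euclidean norm. *)

theory Defs
  imports "HOL-Analysis.Analysis"
begin

end

theory Submission
  imports Defs
begin

lemma sum_abs_le_sqrt_card:
  fixes v :: "real ^ 'n"
  shows "(\<Sum>j\<in>UNIV. \<bar>v $ j\<bar>) \<le> sqrt (real CARD('n)) * norm v"
proof -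
  let ?x = "\<chi> j. \<bar>v $ j\<bar>" and ?o = "(\<chi> j. 1) :: real ^ 'n"
  have "inner ?x ?o = (\<Sum>j\<in>UNIV. \<bar>v $ j\<bar>)" by (simp add: inner_vec_def)
  moreover have "norm ?x = norm v" by (simp add: norm_vec_def)
  moreover have "norm ?o = sqrt (real CARD('n))" by (simp add: norm_vec_def L2_set_def)
  moreover have "inner ?x ?o \<le> norm ?x * norm ?o" by (rule norm_cauchy_schwarz)
  ultimately show ?thesis by (simp add: mult.commute)
qed

theorem mainTheorem1:
  fixes A A' :: "real ^ 'n ^ 'm" and b :: nat
  assumes "CARD('m) \<le> CARD('n)"
    and "A ** transpose A = mat 1"
    and "b \<ge> 1"
    and "\<And>i j. \<bar>A $ i $ j - A' $ i $ j\<bar> < 2 powr (- real b)"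
  shows "\<forall>v :: real ^ 'n. \<exists>s :: real ^ 'n.
           A' *v v = A *v (v - s) \<and>
           norm s \<le> real CARD('n) * 2 powr (- real b) * norm v"
proof
  fix v :: "real ^ 'n"
  define e where "e = (2::real) powr (- real b)"
  define E where "E = A - A'"
  define w where "w = E *v v"
  define s where "s = transpose A *v w"
  have As: "A *v s = w" unfolding s_def by (simp add: matrix_vector_mul_assoc assms(2) del: transpose_matrix_vector)
  have eq: "A' *v v = A *v (v - s)"
    by (simp add: As matrix_vector_mult_diff_distrib w_def E_def matrix_vector_mult_diff_rdistrib)
  have ns: "norm s = norm w"
  proof -
    have "inner s s = inner w w"
      unfolding s_def transpose_matrix_vector dot_lmul_matrix
      by (metis As s_def transpose_matrix_vector)
    then show ?thesis by (simp add: norm_eq_sqrt_inner)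
  qed
  have e0: "e \<ge> 0" unfolding e_def by simp
  have comp: "\<bar>w $ i\<bar> \<le> e * sqrt (real CARD('n)) * norm v" for i
  proof -
    have "\<bar>w $ i\<bar> = \<bar>\<Sum>j\<in>UNIV. E $ i $ j * v $ j\<bar>"
      by (simp add: w_def matrix_vector_mult_def)
    also have "\<dots> \<le> (\<Sum>j\<in>UNIV. \<bar>E $ i $ j\<bar> * \<bar>v $ j\<bar>)"
      by (rule order_trans[OF sum_abs]) (simp add: abs_mult)
    also have "\<dots> \<le> (\<Sum>j\<in>UNIV. e * \<bar>v $ j\<bar>)"
      apply (rule sum_mono) apply (rule mult_right_mono)
      using assms(4)[of i] by (auto simp: E_def e_def less_imp_le)
    also have "\<dots> = e * (\<Sum>j\<in>UNIV. \<bar>v $ j\<bar>)" by (simp add: sum_distrib_left)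
    also have "\<dots> \<le> e * (sqrt (real CARD('n)) * norm v)"
      by (rule mult_left_mono[OF sum_abs_le_sqrt_card e0])
    finally show ?thesis by simp
  qed
  let ?c = "e * sqrt (real CARD('n)) * norm v"
  have c0: "?c \<ge> 0" using e0 by simp
  have "norm w = sqrt (\<Sum>i\<in>UNIV. (w $ i)^2)" by (simp add: norm_vec_def L2_set_def)
  also have "\<dots> \<le> sqrt (\<Sum>i\<in>(UNIV::'m set). ?c^2)"
    apply (rule real_sqrt_le_mono, rule sum_mono)
    using comp by (metis abs_le_square_iff abs_of_nonneg c0 power2_abs)
  also have "\<dots> = sqrt (real CARD('m)) * ?c"
    using c0 by (simp add: real_sqrt_mult)
  also have "\<dots> \<le> sqrt (real CARD('n)) * ?c"
    by (rule mult_right_mono[OF _ c0]) (simp add: assms(1))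
  also have "\<dots> = real CARD('n) * e * norm v"
    by simp
  finally have "norm s \<le> real CARD('n) * e * norm v" using ns by simp
  then show "\<exists>s :: real ^ 'n. A' *v v = A *v (v - s) \<and>
           norm s \<le> real CARD('n) * 2 powr (- real b) * norm v"
    using eq e_def by blast
qed

end
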